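(* For all integers $n\geq 1$, the rockers function $\lambda$ satisfies the asymptotic relation \[ \lambda(n)\sim \frac{n^{\,n-\frac{1}{2n}-\frac{1}{2}}\sqrt{2\pi}}{e^{\,n+\Psi(n)-1}}\qquad (n\to\infty), \] where \[ \Psi(n):=\int_{1}^{n-1}\frac{\sum_{1\leq j\leq t}\log (n-j)}{(t+1)^2}\,dt . \]
   Context: The rockers function $\lambda:\mathbb{N}\to\mathbb{R}^{+}$ is defined by $\lambda(1)=1$, $\lambda(2)=2$, and for $n\geq 3$, \[ \lambda(n)=2^{\frac{n-2}{n-1}}\,3^{\frac{n-3}{n-2}}\cdots (n-1)^{\frac{1}{2}}\, n=\prod_{k=0}^{n-2}(n-k)^{\frac{k}{k+1}} . \] Here $\log$ denotes the natural logarithm, the sum $\sum_{1\le j\le t}$ runs over integers $j$ with $1\le j\le t$ (for real $t$), and $f(n)\sim g(n)$ means $f(n)/g(n)\to 1$ as $n\to\infty$. *)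

theory Defs
  imports "HOL-Analysis.Analysis" "HOL-Library.Landau_Symbols"
begin

(* Rockers function: lambda(n) = 2^((n-2)/(n-1)) 3^((n-3)/(n-2)) ... (n-1)^(1/2) n,
   i.e. n * prod_{k=1}^{n-2} (n-k)^(k/(k+1)); gives lambda(1)=1, lambda(2)=2. *)
definition rockers :: "nat \<Rightarrow> real" where
  "rockers n = real n * (\<Prod>k\<in>{1..n-2}. real (n - k) powr (real k / real (k + 1)))"

definition Psi :: "nat \<Rightarrow> real" where
  "Psi n = integral {1..real n - 1}
     (\<lambda>t. (\<Sum>j\<in>{1..nat \<lfloor>t\<rfloor>}. ln (real n - real j)) / (t + 1)^2)"

end

theory Submission
  imports Defs "HOL-Real_Asymp.Real_Asymp"
begin


lemma ln_lower: fixes y :: real assumes "y \<ge> 0" shows "2*y/(2+y) \<le> ln (1+y)"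
proof -
  let ?h = "\<lambda>y::real. ln (1+y) - 2*y/(2+y)"
  have "?h 0 \<le> ?h y"
  proof (rule DERIV_nonneg_imp_nondecreasing[OF assms])
    fix x :: real assume x: "0 \<le> x" "x \<le> y"
    have "(?h has_real_derivative (1/(1+x) - ((2*(2+x) - 2*x)/(2+x)^2))) (at x)"
      using x by (auto intro!: derivative_eq_intros simp: power2_eq_square)
    moreover have "1/(1+x) - ((2*(2+x) - 2*x)/(2+x)^2) = x^2/((1+x)*(2+x)^2)"
      using x by (simp add: divide_simps power2_eq_square) (simp add: algebra_simps)
    moreover have "x^2/((1+x)*(2+x)^2) \<ge> 0" using x by simp
    ultimately show "\<exists>d. (?h has_real_derivative d) (at x) \<and> 0 \<le> d" by metis
  qed
  thus ?thesis by simp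
qed

lemma ln_upper: fixes y :: real assumes "y \<ge> 0" shows "ln (1+y) \<le> y - y^2/2 + y^3/3"
proof -
  let ?h = "\<lambda>y::real. y - y^2/2 + y^3/3 - ln (1+y)"
  have "?h 0 \<le> ?h y"
  proof (rule DERIV_nonneg_imp_nondecreasing[OF assms])
    fix x :: real assume x: "0 \<le> x" "x \<le> y"
    have "(?h has_real_derivative (1 - x + x^2 - 1/(1+x))) (at x)"
      using x by (auto intro!: derivative_eq_intros simp: power2_eq_square)
    moreover have "1 - x + x^2 - 1/(1+x) = x^3/(1+x)"
      using x by (simp add: field_simps power2_eq_square power3_eq_cube)
    moreover have "x^3/(1+x) \<ge> 0" using x by simp
    ultimately show "\<exists>d. (?h has_real_derivative d) (at x) \<and> 0 \<le> d" by metis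
  qed
  thus ?thesis by simp
qed

definition dd :: "nat \<Rightarrow> real" where
  "dd n = ln (fact n) - (real n + 1/2) * ln (real n) + real n"

lemma dd_diff: assumes "n \<ge> 1"
  shows "dd n - dd (Suc n) = (real n + 1/2) * ln (1 + 1/real n) - 1"
proof -
  have h1: "ln (fact (Suc n) :: real) = ln (real n + 1) + ln (fact n)"
    by (simp add: ln_mult add.commute)
  have h2: "ln (1 + 1/real n) = ln (real n + 1) - ln (real n)"
  proof -
    have "1 + 1/real n = (real n + 1)/real n" using assms by (simp add: field_simps)
    thus ?thesis using assms by (simp add: ln_div)
  qed
  show ?thesis unfolding dd_def by (simp only: h1 h2 of_nat_Suc) (simp add: algebra_simps)
qed

lemma dd_diff_nonneg: assumes "n \<ge> 1" shows "dd (Suc n) \<le> dd n"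
proof -
  have n: "real n \<ge> 1" using assms by simp
  have "2*(1/real n)/(2+1/real n) \<le> ln (1 + 1/real n)" by (rule ln_lower) simp
  moreover have "2*(1/real n)/(2+1/real n) = 1/(real n + 1/2)" using n by (simp add: field_simps)
  ultimately have "1 \<le> (real n + 1/2) * ln (1 + 1/real n)"
    using n by (simp add: field_simps)
  thus ?thesis using dd_diff[OF assms] by simp
qed

lemma dd_diff_upper: assumes "n \<ge> 1" shows "dd n - dd (Suc n) \<le> 1/(2*real n) - 1/(2*(real n + 1))"
proof -
  have n: "real n \<ge> 1" using assms by simp
  define y where "y = 1 / real n"
  have y: "0 < y" "y \<le> 1" using n by (auto simp: y_def)
  have "ln (1 + y) \<le> y - y^2/2 + y^3/3" by (rule ln_upper) (use y in simp)
  hence "(real n + 1/2) * ln (1 + y) - 1 \<le> (real n + 1/2) * (y - y^2/2 + y^3/3) - 1"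
    using n by (intro diff_right_mono mult_left_mono) auto
  also have "(real n + 1/2) * (y - y^2/2 + y^3/3) - 1 = y^2/12 + y^3/6"
    using n by (simp add: y_def field_simps power2_eq_square power3_eq_cube)
  also have "\<dots> \<le> y^2/4"
  proof -
    have "y^3 \<le> y^2" using y by (simp add: power_decreasing)
    thus ?thesis by simp
  qed
  also have "y^2/4 \<le> 1/(2*real n) - 1/(2*(real n + 1))"
  proof -
    have e: "1/(2*real n) - 1/(2*(real n + 1)) = 1/(2*real n*(real n+1))" using n by (simp add: field_simps)
    have "2*real n*(real n+1) \<le> 4 * real n^2" using mult_right_mono[OF n, of "real n"] n
      by (simp add: power2_eq_square algebra_simps)
    hence "1/(4 * real n^2) \<le> 1/(2*real n*(real n+1))" using n by (intro divide_left_mono) auto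
    thus ?thesis unfolding e by (simp add: y_def power2_eq_square)
  qed
  finally show ?thesis using dd_diff[OF assms] by (simp add: y_def)
qed

lemma dd_convergent: obtains L where "dd \<longlonglongrightarrow> L"
proof -
  define X where "X i = dd (Suc i)" for i
  have dec: "decseq X" unfolding X_def by (intro decseq_SucI dd_diff_nonneg) simp
  define e where "e i = dd (Suc i) - 1/(2*(real i + 1))" for i
  have inc: "incseq e"
  proof (intro incseq_SucI)
    fix i
    have "dd (Suc i) - dd (Suc (Suc i)) \<le> 1/(2*real (Suc i)) - 1/(2*(real (Suc i) + 1))"
      by (rule dd_diff_upper) simp
    thus "e i \<le> e (Suc i)" unfolding e_def by (simp add: algebra_simps)
  qed
  have e0: "e 0 = 1/2" by (simp add: e_def dd_def)
  have "\<forall>i. 1/2 \<le> X i"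
  proof
    fix i
    have "e 0 \<le> e i" using inc by (simp add: incseq_def)
    thus "1/2 \<le> X i" unfolding e0 unfolding e_def X_def by (smt (verit) divide_nonneg_nonneg of_nat_0_le_iff)
  qed
  then obtain L where "X \<longlonglongrightarrow> L" using decseq_convergent[OF dec] by blast
  hence "dd \<longlonglongrightarrow> L" unfolding X_def by (rule LIMSEQ_imp_Suc)
  thus ?thesis using that by blast
qed

lemma wallis_closed:
  "(\<Prod>k=1..n. 4*real k^2/(4*real k^2 - 1)) = (2^n * fact n)^4 / ((fact (2*n))^2 * (2*real n+1))"
proof (induction n)
  case 0 then show ?case by simp
next
  case (Suc n)
  have f: "(fact (2 * Suc n) :: real) = (2*real n + 2) * (2*real n+1) * fact (2*n)"
    by (simp add: algebra_simps)
  have pos: "(fact (2*n)::real) > 0" by simp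
  have "4*real n^2 + 8*real n + 3 \<noteq> 0" by (smt (verit) of_nat_0_le_iff zero_le_power2)
  have g: "4 * real (Suc n)^2 - 1 = (2*real n+1)*(2*real n+3)"
    by (simp add: algebra_simps power2_eq_square)
  have key: "\<And>a F G x::real. a > 0 \<Longrightarrow> F > 0 \<Longrightarrow> G > 0 \<Longrightarrow> x \<ge> 0 \<Longrightarrow>
      (a*F)^4/(G^2*(2*x+1)) * (4*(x+1)^2/((2*x+1)*(2*x+3))) =
      (2*a*((x+1)*F))^4/(((2*x+2)*(2*x+1)*G)^2*(2*(x+1)+1))"
    by (simp add: divide_simps) (simp add: algebra_simps power2_eq_square power4_eq_xxxx)
  show ?case
    unfolding prod.cl_ivl_Suc Suc.IH f
    using key[of "2^n" "fact n" "fact (2*n)" "real n"] g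
    by (simp add: mult.assoc ac_simps)
qed

lemma ln_wallis: assumes "n \<ge> 1"
  shows "ln (\<Prod>k=1..n. 4*real k^2/(4*real k^2 - 1)) = 4*dd n - 2*dd (2*n) - ln 2 - ln (2 + 1/real n)"
proof -
  have x: "real n > 0" using assms by simp
  define F :: real where "F = fact n"
  define G :: real where "G = fact (2*n)"
  have F: "F > 0" and G: "G > 0" by (simp_all add: F_def G_def)
  have "ln (\<Prod>k=1..n. 4*real k^2/(4*real k^2 - 1)) = ln ((2^n * F)^4 / (G^2 * (2*real n+1)))"
    unfolding wallis_closed F_def G_def ..
  also have "\<dots> = 4 * (real n * ln 2 + ln F) - 2 * ln G - ln (2*real n+1)"
    using F G x by (simp add: ln_div ln_mult ln_realpow)
  also have "ln F = dd n + (real n + 1/2) * ln (real n) - real n" by (simp add: dd_def F_def)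
  also have "ln G = dd (2*n) + (2*real n + 1/2) * (ln 2 + ln (real n)) - 2*real n"
    using x by (simp add: dd_def G_def ln_mult)
  also have "ln (2*real n+1) = ln (real n) + ln (2 + 1/real n)"
  proof -
    have "2*real n+1 = real n * (2 + 1/real n)" using x by (simp add: field_simps)
    moreover have p: "2 + 1/real n > 0" using x by (simp add: add_pos_pos)
    ultimately show ?thesis using x p by (simp add: ln_mult)
  qed
  finally show ?thesis by (simp add: algebra_simps)
qed

lemma dd_limit: "dd \<longlonglongrightarrow> ln (2*pi)/2"
proof -
  obtain L where L: "dd \<longlonglongrightarrow> L" using dd_convergent by blast
  have L2: "(\<lambda>n. dd (2*n)) \<longlonglongrightarrow> L"
    using LIMSEQ_subseq_LIMSEQ[OF L, of "\<lambda>n. 2*n"] by (simp add: strict_mono_def o_def)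
  have l: "(\<lambda>n. ln (2 + 1/real n)) \<longlonglongrightarrow> ln 2" by real_asymp
  have A: "(\<lambda>n. 4*dd n - 2*dd (2*n) - ln 2 - ln (2 + 1/real n)) \<longlonglongrightarrow> 4*L - 2*L - ln 2 - ln 2"
    by (intro tendsto_intros L L2 l)
  have B: "(\<lambda>n. ln (\<Prod>k=1..n. 4*real k^2/(4*real k^2 - 1))) \<longlonglongrightarrow> ln (pi/2)"
    by (intro tendsto_ln wallis) simp
  have "eventually (\<lambda>n. ln (\<Prod>k=1..n. 4*real k^2/(4*real k^2 - 1)) = 4*dd n - 2*dd (2*n) - ln 2 - ln (2 + 1/real n)) sequentially"
    using eventually_ge_at_top[of "1::nat"] by eventually_elim (rule ln_wallis)
  hence "(\<lambda>n. 4*dd n - 2*dd (2*n) - ln 2 - ln (2 + 1/real n)) \<longlonglongrightarrow> ln (pi/2)"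
    by (rule Lim_transform_eventually[OF B])
  hence "4*L - 2*L - ln 2 - ln 2 = ln (pi/2)" using A LIMSEQ_unique by blast
  moreover have "ln (pi/2) = ln pi - ln 2" by (simp add: ln_div)
  moreover have "ln (2*pi) = ln 2 + ln pi" by (simp add: ln_mult)
  ultimately have LL: "L = ln (2*pi)/2" by linarith
  from L show ?thesis unfolding LL .
qed



lemma abel_sum:
  fixes a :: "nat \<Rightarrow> real"
  shows "(\<Sum>k=1..N. (\<Sum>j=1..k. a j) * (1/(real k+1) - 1/(real k+2)))
         = (\<Sum>k=1..N. a k/(real k+1)) - (\<Sum>j=1..N. a j)/(real N+2)"
proof (induction N)
  case 0 then show ?case by simp
next
  case (Suc N)
  have e: "\<And>f::nat\<Rightarrow>real. sum f {1..Suc N} = sum f {1..N} + f (Suc N)" by simp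
  have key: "\<And>P S b x::real. x \<ge> 0 \<Longrightarrow> P - S/(x+2) + (S+b)*(1/(x+1+1) - 1/(x+1+2))
      = (P + b/(x+1+1)) - (S+b)/(x+1+2)"
  proof -
    fix P S b x :: real assume x: "x \<ge> 0"
    have h: "x+1+1 = x+2" "x+1+2 = x+3" by simp_all
    have "x + 2 > 0" "x + 3 > 0" using x by simp_all
    then show "P - S/(x+2) + (S+b)*(1/(x+1+1) - 1/(x+1+2)) = (P + b/(x+1+1)) - (S+b)/(x+1+2)"
      unfolding h by (simp add: diff_divide_distrib add_divide_distrib right_diff_distrib)
  qed
  show ?case unfolding e Suc.IH of_nat_Suc
    using key[of "real N" "\<Sum>k=1..N. a k/(real k+1)" "\<Sum>j=1..N. a j" "a (Suc N)"] by simp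
qed

lemma ln_fact_sum: "ln (fact m :: real) = (\<Sum>i=1..m. ln (real i))"
proof (induction m)
  case 0 then show ?case by simp
next
  case (Suc m)
  have "ln (fact (Suc m) :: real) = ln (real (Suc m)) + ln (fact m)"
    by (simp add: ln_mult del: of_nat_Suc)
  thus ?case using Suc.IH by simp
qed

lemma piece_integral:
  fixes c :: real and m :: nat
  shows "((\<lambda>t. c/(t+1)^2) has_integral (c * (1/(real m+1) - 1/(real m+2)))) {real m..real m+1}"
proof -
  have "((\<lambda>t. c/(t+1)^2) has_integral ((\<lambda>t. - c/(t+1)) (real m + 1) - (\<lambda>t. - c/(t+1)) (real m)))
          {real m..real m+1}"
  proof (rule fundamental_theorem_of_calculus)
    fix x assume x: "x \<in> {real m..real m+1}"
    hence "x + 1 \<noteq> 0" by auto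
    hence "((\<lambda>t. - c/(t+1)) has_real_derivative c/(x+1)^2) (at x)"
      by (auto intro!: derivative_eq_intros simp: power2_eq_square field_simps)
    thus "((\<lambda>t. - c/(t+1)) has_vector_derivative c/(x+1)^2) (at x within {real m..real m+1})"
      by (simp add: has_real_derivative_iff_has_vector_derivative has_vector_derivative_at_within)
  qed simp
  moreover have "(\<lambda>t. - c/(t+1)) (real m + 1) - (\<lambda>t. - c/(t+1)) (real m) = c * (1/(real m+1) - 1/(real m+2))"
    by (simp add: field_simps)
  ultimately show ?thesis by simp
qed

lemma Psi_integral:
  fixes n m :: nat
  assumes "m \<ge> 1"
  shows "((\<lambda>t. (\<Sum>j\<in>{1..nat \<lfloor>t\<rfloor>}. ln (real n - real j)) / (t + 1)^2) has_integral
          (\<Sum>k=1..m-1. (\<Sum>j=1..k. ln (real n - real j)) * (1/(real k+1) - 1/(real k+2)))) {1..real m}"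
  using assms
proof (induction m rule: nat_induct_at_least)
  case base
  then show ?case using has_integral_refl(2)[of _ "1::real"] by simp
next
  case (Suc m)
  let ?g = "\<lambda>t. (\<Sum>j\<in>{1..nat \<lfloor>t\<rfloor>}. ln (real n - real j)) / (t + 1)^2"
  let ?c = "\<Sum>j=1..m. ln (real n - real j)"
  have p: "(?g has_integral (?c * (1/(real m+1) - 1/(real m+2)))) {real m..real m+1}"
  proof (rule has_integral_spike_finite[of "{real m + 1}"])
    show "((\<lambda>t. ?c/(t+1)^2) has_integral (?c * (1/(real m+1) - 1/(real m+2)))) {real m..real m+1}"
      by (rule piece_integral)
    fix t assume t: "t \<in> {real m..real m+1} - {real m + 1}"
    hence "\<lfloor>t\<rfloor> = int m" by (auto intro!: floor_unique)
    thus "?g t = ?c/(t+1)^2" by simp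
  qed simp
  have "(?g has_integral ((\<Sum>k=1..m-1. (\<Sum>j=1..k. ln (real n - real j)) * (1/(real k+1) - 1/(real k+2)))
          + ?c * (1/(real m+1) - 1/(real m+2)))) {1..real m + 1}"
    using has_integral_combine[of 1 "real m" "real m + 1", OF _ _ Suc.IH p] Suc.hyps by simp
  moreover have "(\<Sum>k=1..Suc m-1. (\<Sum>j=1..k. ln (real n - real j)) * (1/(real k+1) - 1/(real k+2)))
     = (\<Sum>k=1..m-1. (\<Sum>j=1..k. ln (real n - real j)) * (1/(real k+1) - 1/(real k+2)))
          + ?c * (1/(real m+1) - 1/(real m+2))"
    using Suc.hyps by (cases m) (auto simp: add.commute)
  ultimately show ?case by (simp add: add.commute)
qed



lemma rockers_pos: assumes "n \<ge> 1" shows "rockers n > 0"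
  unfolding rockers_def using assms by (auto intro!: prod_pos mult_pos_pos)

lemma sumA: assumes "n \<ge> 2"
  shows "(\<Sum>j=1..n-2. ln (real n - real j)) = ln (fact (n-1))"
proof -
  have "(\<Sum>j=1..n-2. ln (real n - real j)) = (\<Sum>i=2..n-1. ln (real i))"
  proof (rule sum.reindex_bij_witness[of _ "\<lambda>i. n - i" "\<lambda>j. n - j"])
    fix j assume "j \<in> {2..n-1}" thus "n - (n - j) = j" "n - j \<in> {1..n-2}" by auto
  next
    fix i assume i: "i \<in> {1..n-2}"
    thus "n - (n - i) = i" "n - i \<in> {2..n-1}" by auto
    have "i \<le> n" using i by auto
    thus "ln (real (n - i)) = ln (real n - real i)" by (simp add: of_nat_diff)
  qed
  also have "\<dots> = (\<Sum>i=1..n-1. ln (real i))"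
  proof -
    have "{1..n-1} = insert 1 {2..n-1}" using assms by auto
    thus ?thesis by simp
  qed
  also have "\<dots> = ln (fact (n-1))" by (simp add: ln_fact_sum)
  finally show ?thesis .
qed

lemma Psi_eq: assumes "n \<ge> 2"
  shows "Psi n = (\<Sum>k=1..n-2. ln (real n - real k)/(real k+1)) - ln (fact (n-1))/real n"
proof -
  have e1: "real n - 1 = real (n-1)" using assms by (simp add: of_nat_diff)
  have e2: "n - 1 - 1 = n - 2" by simp
  have I: "((\<lambda>t. (\<Sum>j\<in>{1..nat \<lfloor>t\<rfloor>}. ln (real n - real j)) / (t + 1)^2) has_integral
          (\<Sum>k=1..n-2. (\<Sum>j=1..k. ln (real n - real j)) * (1/(real k+1) - 1/(real k+2)))) {1..real n - 1}"
    using Psi_integral[of "n-1" n] assms unfolding e1 e2 by simp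
  have "Psi n = (\<Sum>k=1..n-2. (\<Sum>j=1..k. ln (real n - real j)) * (1/(real k+1) - 1/(real k+2)))"
    unfolding Psi_def by (rule integral_unique[OF I])
  also have "\<dots> = (\<Sum>k=1..n-2. ln (real n - real k)/(real k+1)) - (\<Sum>j=1..n-2. ln (real n - real j))/(real (n-2)+2)"
    by (rule abel_sum)
  also have "real (n-2) + 2 = real n" using assms by (simp add: of_nat_diff)
  finally show ?thesis unfolding sumA[OF assms] .
qed

lemma ln_rockers: assumes "n \<ge> 2"
  shows "ln (rockers n) = ln (fact n) - ln (fact (n-1))/real n - Psi n"
proof -
  have pos: "\<And>k. k \<in> {1..n-2} \<Longrightarrow> real (n-k) powr (real k / real (k+1)) > 0" using assms by auto
  have P: "(\<Prod>k\<in>{1..n-2}. real (n - k) powr (real k / real (k + 1))) > 0"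
    by (rule prod_pos) (use pos in auto)
  have "ln (rockers n) = ln (real n) + ln (\<Prod>k\<in>{1..n-2}. real (n - k) powr (real k / real (k + 1)))"
    unfolding rockers_def by (rule ln_mult_pos) (use assms P in simp_all)
  also have "ln (\<Prod>k\<in>{1..n-2}. real (n - k) powr (real k / real (k + 1)))
       = (\<Sum>k=1..n-2. ln (real (n - k) powr (real k / real (k + 1))))"
    by (rule ln_prod) (simp, metis pos less_irrefl)
  finally have r1: "ln (rockers n) = ln (real n) + (\<Sum>k=1..n-2. (real k/real (k+1)) * ln (real (n-k)))"
    by simp
  have r2: "(\<Sum>k=1..n-2. (real k/real (k+1)) * ln (real (n-k)))
      = (\<Sum>k=1..n-2. ln (real n - real k)) - (\<Sum>k=1..n-2. ln (real n - real k)/(real k+1))"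
    unfolding sum_subtractf[symmetric]
  proof (rule sum.cong)
    fix k assume k: "k \<in> {1..n-2}"
    have kn: "k \<le> n" using k by auto
    have e1: "real k/real (k+1) = 1 - 1/(real k+1)" by (simp add: field_simps)
    have e2: "real (n-k) = real n - real k" using kn by (simp add: of_nat_diff)
    show "(real k/real (k+1)) * ln (real (n-k)) = ln (real n - real k) - ln (real n - real k)/(real k+1)"
      unfolding e1 e2 by (simp add: left_diff_distrib)
  qed simp
  have r3: "ln (fact n :: real) = ln (real n) + ln (fact (n-1))"
  proof -
    have "(fact n :: real) = real n * fact (n-1)" using assms by (simp add: fact_reduce)
    moreover have "ln (real n * fact (n-1)) = ln (real n) + ln (fact (n-1) :: real)"
      using assms by (intro ln_mult_pos) auto
    ultimately show ?thesis by simp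
  qed
  show ?thesis unfolding r1 r2 r3 sumA[OF assms] Psi_eq[OF assms] by linarith
qed



lemma key_alg:
  fixes x l D P c :: real assumes x: "x > 0"
  shows "((D + (x+1/2)*l - x) - ((D + (x+1/2)*l - x) - l)/x - P)
          - ((x - 1/(2*x) - 1/2)*l + c - (x + P - 1)) = l/x + D - c - D/x"
  using x by (simp add: field_simps)

theorem mainTheorem1:
  shows "rockers \<sim>[at_top]
    (\<lambda>n. real n powr (real n - 1 / (2 * real n) - 1 / 2) * sqrt (2 * pi)
          / exp (real n + Psi n - 1))"
proof (rule asymp_equivI')
  define T where "T n = real n powr (real n - 1 / (2 * real n) - 1 / 2) * sqrt (2 * pi)
          / exp (real n + Psi n - 1)" for n
  define c where "c = ln (2*pi)/2"
  have ev: "eventually (\<lambda>n. exp (ln (real n)/real n + dd n - c - dd n * (1/real n)) = rockers n / T n) at_top"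
    using eventually_ge_at_top[of "2::nat"]
  proof eventually_elim
    case (elim n)
    have x: "real n > 0" using elim by simp
    have Tpos: "T n > 0" unfolding T_def using x by simp
    have rpos: "rockers n > 0" using rockers_pos[of n] elim by simp
    have lnT: "ln (T n) = (real n - 1/(2*real n) - 1/2) * ln (real n) + c - (real n + Psi n - 1)"
      unfolding T_def c_def using x by (simp add: ln_div ln_mult ln_sqrt)
    have lf: "ln (fact (n-1) :: real) = ln (fact n) - ln (real n)"
    proof -
      have "(fact n :: real) = real n * fact (n-1)" using elim by (simp add: fact_reduce)
      moreover have "ln (real n * fact (n-1)) = ln (real n) + ln (fact (n-1) :: real)"
        using x by (intro ln_mult_pos) auto
      ultimately show ?thesis by simp
    qed
    have F: "ln (fact n :: real) = dd n + (real n + 1/2) * ln (real n) - real n" by (simp add: dd_def)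
    have "ln (rockers n) - ln (T n) = ln (real n)/real n + dd n - c - dd n / real n"
      unfolding ln_rockers[OF elim] lnT lf F by (rule key_alg[OF x])
    hence "exp (ln (real n)/real n + dd n - c - dd n * (1/real n)) = exp (ln (rockers n) - ln (T n))" by simp
    also have "\<dots> = rockers n / T n" using rpos Tpos by (simp add: exp_diff)
    finally show ?case .
  qed
  have l1: "(\<lambda>n::nat. ln (real n)/real n) \<longlonglongrightarrow> 0" by real_asymp
  have l2: "(\<lambda>n::nat. 1/real n) \<longlonglongrightarrow> 0" by real_asymp
  have d: "dd \<longlonglongrightarrow> c" unfolding c_def by (rule dd_limit)
  have "(\<lambda>n. exp (ln (real n)/real n + dd n - c - dd n * (1/real n))) \<longlonglongrightarrow> exp (0 + c - c - c * 0)"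
    by (intro tendsto_intros l1 l2 d)
  hence "(\<lambda>n. exp (ln (real n)/real n + dd n - c - dd n * (1/real n))) \<longlonglongrightarrow> 1" by simp
  hence "(\<lambda>n. rockers n / T n) \<longlonglongrightarrow> 1" by (rule Lim_transform_eventually[OF _ ev])
  thus "((\<lambda>n. rockers n / (real n powr (real n - 1 / (2 * real n) - 1 / 2) * sqrt (2 * pi)
          / exp (real n + Psi n - 1))) \<longlongrightarrow> 1) at_top" unfolding T_def .
qed


end
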